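(* Let $\mu_1,\mu_2$ be real numbers with $-\tfrac12<\mu_1<\mu_2$ and let $\theta$ be the linear operator acting termwise on power series by $\theta(x^n)=\frac{\gamma_{\mu_1}(n)}{\gamma_{\mu_2}(n)}x^n$. Then for every $f(x)=\sum_{n\ge0}a_nx^n$ whose power series converges on $]-1,1[$ and every $x\in\,]-1,1[$, $$\theta(f)(x)=\frac{1}{\beta(\mu_1+\frac12,\mu_2-\mu_1)}\int_{-1}^1f(xt)\,|t|^{2\mu_1}(1-t)^{\mu_2-\mu_1-1}(1+t)^{\mu_2-\mu_1}\,dt .$$ In particular, $\exp_{\mu_2}(x)=\frac{1}{\beta(\mu_1+\frac12,\mu_2-\mu_1)}\int_{-1}^1\exp_{\mu_1}(xt)|t|^{2\mu_1}(1-t)^{\mu_2-\mu_1-1}(1+t)^{\mu_2-\mu_1}dt$.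
   Context: For $\mu\notin\{-\frac12,-\frac32,\dots\}$ and $n=2p+\epsilon$ with $p\in\mathbb{N}$, $\epsilon\in\{0,1\}$, set $\gamma_\mu(n)=2^{2p+\epsilon}\,p!\,(\mu+\frac12)_{p+\epsilon}$, where $(\alpha)_n=\Gamma(\alpha+n)/\Gamma(\alpha)$. The generalized exponential is $\exp_\mu(x)=\sum_{n\ge0}x^n/\gamma_\mu(n)$. $\beta(a,b)=\Gamma(a)\Gamma(b)/\Gamma(a+b)$ is Euler's Beta function. *)

theory Defs
  imports "HOL-Analysis.Analysis"
begin

definition gamma_mu :: "real \<Rightarrow> nat \<Rightarrow> real" where
  "gamma_mu \<mu> n = 2 ^ n * fact (n div 2) * pochhammer (\<mu> + 1/2) (n div 2 + n mod 2)"

definition exp_mu :: "real \<Rightarrow> real \<Rightarrow> real" where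
  "exp_mu \<mu> x = (\<Sum>n. x ^ n / gamma_mu \<mu> n)"

definition weight :: "real \<Rightarrow> real \<Rightarrow> real \<Rightarrow> real" where
  "weight \<mu>1 \<mu>2 t = \<bar>t\<bar> powr (2 * \<mu>1) * (1 - t) powr (\<mu>2 - \<mu>1 - 1) * (1 + t) powr (\<mu>2 - \<mu>1)"

end

theory Submission
  imports Defs
begin



lemma L1:
  fixes s d :: real
  assumes s: "s > -1" and d: "d > 0"
  shows "((\<lambda>t. t powr s * (1 - t^2) powr (d - 1)) has_integral Beta ((s+1)/2) d / 2) {0..1}"
proof -
  define c where "c = (s+1)/2"
  have c: "c > 0" using s by (simp add: c_def)
  have B: "Beta c d > 0" using c d by (simp add: Beta_def)
  have "((\<lambda>u. u powr (c - 1) * (1 - u) powr (d - 1)) has_integral Beta c d) {0..1}"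
    using has_integral_Beta_real[OF c d] .
  from nn_integral_has_integral_lebesgue'[OF _ this]
  have "(\<integral>\<^sup>+u. ennreal (u powr (c - 1) * (1 - u) powr (d - 1)) * indicator {0..1} u \<partial>lborel) = ennreal (Beta c d)"
    by simp
  also have "(\<integral>\<^sup>+u. ennreal (u powr (c - 1) * (1 - u) powr (d - 1)) * indicator {0..1} u \<partial>lborel)
     = (\<integral>\<^sup>+u. ennreal (u powr (c - 1) * (1 - u) powr (d - 1) * indicator {(0::real)^2..1^2} u) \<partial>lborel)"
    by (intro nn_integral_cong) (auto simp: indicator_def)
  also have "\<dots> = (\<integral>\<^sup>+x. ennreal ((x^2) powr (c - 1) * (1 - x^2) powr (d - 1) * (2*x) * indicator {0..1} x) \<partial>lborel)"
    by (subst nn_integral_substitution[where g = "\<lambda>x. x ^ 2" and g' = "\<lambda>x. 2 * x"])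
       (auto intro!: derivative_eq_intros continuous_intros simp: set_borel_measurable_def)
  also have "\<dots> = (\<integral>\<^sup>+x. ennreal (x powr s * (1 - x^2) powr (d - 1) * indicator {0..1} x * 2) \<partial>lborel)"
  proof (intro nn_integral_cong)
    fix x :: real
    show "ennreal ((x^2) powr (c - 1) * (1 - x^2) powr (d - 1) * (2*x) * indicator {0..1} x) =
          ennreal (x powr s * (1 - x^2) powr (d - 1) * indicator {0..1} x * 2)"
    proof (cases "x > 0")
      case True
      have "(x^2) powr (c - 1) = (x powr 2) powr (c - 1)"
        using True by (simp add: powr_realpow)
      also have "\<dots> = x powr (2 * (c - 1))" by (simp add: powr_powr)
      finally have "(x^2) powr (c - 1) * x = x powr (2 * (c - 1)) * x powr 1" using True by simp
      also have "2 * (c - 1) = s - 1" by (simp add: c_def field_simps)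
      also have "x powr (s - 1) * x powr 1 = x powr s" by (subst powr_add [symmetric]) simp
      finally have "(x^2) powr (c - 1) * x = x powr s" .
      then show ?thesis by (metis (no_types, lifting) mult.assoc mult.commute)
    next
      case False
      then show ?thesis by (cases "x = 0") (auto simp: indicator_def)
    qed
  qed
  finally have I: "(\<integral>\<^sup>+x. ennreal (x powr s * (1 - x^2) powr (d - 1) * indicator {0..1} x * 2) \<partial>lborel) = ennreal (Beta c d)" .
  have "((\<lambda>x. x powr s * (1 - x^2) powr (d - 1) * indicator {0..1} x * 2) has_integral Beta c d) UNIV"
    by (rule nn_integral_has_integral[OF _ _ I]) (use B in \<open>auto simp: indicator_def\<close>)
  then have "((\<lambda>x. (x powr s * (1 - x^2) powr (d - 1) * indicator {0..1} x * 2) / 2) has_integral Beta c d / 2) UNIV"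
    by (rule has_integral_divide)
  then have "((\<lambda>x. if x \<in> {0..1} then x powr s * (1 - x^2) powr (d - 1) else 0) has_integral Beta c d / 2) UNIV"
    by (rule has_integral_cong[THEN iffD1, rotated]) (auto simp: indicator_def)
  then show ?thesis using has_integral_restrict_UNIV c_def by blast
qed




lemma pw_pos:
  fixes t a d :: real
  assumes t: "0 \<le> t" "t \<le> 1"
  shows "t ^ n * (\<bar>t\<bar> powr (2 * a) * (1 - t) powr (d - 1) * (1 + t) powr d) =
         t powr (real n + 2*a) * (1 - t^2) powr (d - 1) + t powr (real n + 1 + 2*a) * (1 - t^2) powr (d - 1)"
proof (cases "t = 0")
  case True then show ?thesis by (cases n) auto
next
  case False
  with t have tp: "t > 0" by auto
  have e1: "t ^ n * \<bar>t\<bar> powr (2 * a) = t powr (real n + 2*a)"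
    using tp by (simp add: powr_add powr_realpow)
  have e2: "t powr (real n + 1 + 2*a) = t powr (real n + 2*a) * t"
    using tp by (simp add: powr_add)
  have e3: "(1 + t) powr d = (1 + t) powr (d - 1) * (1 + t)"
    using tp powr_add[of "1+t" "d-1" 1] by simp
  have e4: "(1 - t^2) powr (d - 1) = (1 - t) powr (d - 1) * (1 + t) powr (d - 1)"
    by (simp add: powr_mult [symmetric] power2_eq_square algebra_simps)
  have "t ^ n * (\<bar>t\<bar> powr (2 * a) * (1 - t) powr (d - 1) * (1 + t) powr d) =
     t powr (real n + 2*a) * ((1 - t) powr (d - 1) * (1 + t) powr (d - 1)) * (1 + t)"
    unfolding e1[symmetric] e3 by (simp only: mult_ac)
  also have "\<dots> = t powr (real n + 2*a) * (1 - t^2) powr (d - 1) + t powr (real n + 1 + 2*a) * (1 - t^2) powr (d - 1)"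
    unfolding e2 e4 by (simp add: algebra_simps)
  finally show ?thesis .
qed

lemma pw_neg:
  fixes t a d :: real
  assumes t: "0 \<le> t" "t \<le> 1"
  shows "(-t) ^ n * (\<bar>-t\<bar> powr (2 * a) * (1 - (-t)) powr (d - 1) * (1 + (-t)) powr d) =
         (-1)^n * (t powr (real n + 2*a) * (1 - t^2) powr (d - 1) - t powr (real n + 1 + 2*a) * (1 - t^2) powr (d - 1))"
proof (cases "t = 0")
  case True then show ?thesis by (cases n) auto
next
  case False
  with t have tp: "t > 0" by auto
  have e1: "t ^ n * \<bar>t\<bar> powr (2 * a) = t powr (real n + 2*a)"
    using tp by (simp add: powr_add powr_realpow)
  have e2: "t powr (real n + 1 + 2*a) = t powr (real n + 2*a) * t"
    using tp by (simp add: powr_add)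
  have e3: "(1 - t) powr d = (1 - t) powr (d - 1) * (1 - t)"
    using t powr_add[of "1-t" "d-1" 1] by simp
  have e4: "(1 - t^2) powr (d - 1) = (1 - t) powr (d - 1) * (1 + t) powr (d - 1)"
    by (simp add: powr_mult [symmetric] power2_eq_square algebra_simps)
  have e5: "(-t)^n = (-1)^n * t^n" by (rule power_minus)
  have "(-t) ^ n * (\<bar>-t\<bar> powr (2 * a) * (1 - (-t)) powr (d - 1) * (1 + (-t)) powr d) =
     (-1)^n * ((t ^ n * \<bar>t\<bar> powr (2 * a)) * ((1 - t) powr (d - 1) * (1 + t) powr (d - 1)) * (1 - t))"
    by (simp add: e3 e5 mult_ac)
  also have "\<dots> = (-1)^n * (t powr (real n + 2*a) * ((1 - t) powr (d - 1) * (1 + t) powr (d - 1)) * (1 - t))"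
    by (simp only: e1)
  also have "\<dots> = (-1)^n * (t powr (real n + 2*a) * (1 - t^2) powr (d - 1) - t powr (real n + 1 + 2*a) * (1 - t^2) powr (d - 1))"
    unfolding e2 e4 by (simp add: algebra_simps)
  finally show ?thesis .
qed




lemma moment:
  fixes a b :: real
  assumes a: "a > -1/2" and ab: "a < b"
  shows "((\<lambda>t. t ^ n * weight a b t) has_integral Beta (a + 1/2 + real (n div 2 + n mod 2)) (b - a)) {-1..1}"
proof -
  define d where "d = b - a"
  have d: "d > 0" using ab by (simp add: d_def)
  define G where "G = (\<lambda>s t. t powr s * (1 - t^2) powr (d - 1) :: real)"
  define J where "J = (\<lambda>s. Beta ((s+1)/2) d / 2)"
  define s1 where "s1 = real n + 2*a"
  define s2 where "s2 = real n + 1 + 2*a"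
  have s1: "s1 > -1" and s2: "s2 > -1" using a by (auto simp: s1_def s2_def)
  have I1: "(G s1 has_integral J s1) {0..1}" unfolding G_def J_def by (rule L1[OF s1 d])
  have I2: "(G s2 has_integral J s2) {0..1}" unfolding G_def J_def by (rule L1[OF s2 d])
  have wdef: "weight a b t = \<bar>t\<bar> powr (2 * a) * (1 - t) powr (d - 1) * (1 + t) powr d" for t
    by (simp add: weight_def d_def)
  have P: "((\<lambda>t. t ^ n * weight a b t) has_integral (J s1 + J s2)) {0..1}"
    using has_integral_add[OF I1 I2]
    apply (rule has_integral_eq[rotated])
    apply (simp only: wdef G_def s1_def s2_def)
    apply (subst pw_pos)
      apply auto
    done
  have "((\<lambda>t. (-1)^n * (G s1 t - G s2 t)) has_integral ((-1)^n * (J s1 - J s2))) {0..1}"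
    using has_integral_mult_right[OF has_integral_diff[OF I1 I2]] .
  then have "((\<lambda>t. (-t) ^ n * weight a b (-t)) has_integral ((-1)^n * (J s1 - J s2))) {0..1}"
    apply (rule has_integral_eq[rotated])
    apply (simp only: wdef G_def s1_def s2_def)
    apply (subst pw_neg)
      apply auto
    done
  then have "((\<lambda>x. (-(-x)) ^ n * weight a b (-(-x))) has_integral ((-1)^n * (J s1 - J s2))) {-1..-0}"
    by (rule has_integral_reflect_real[THEN iffD2])
  then have N: "((\<lambda>t. t ^ n * weight a b t) has_integral ((-1)^n * (J s1 - J s2))) {-1..0}"
    by simp
  have T: "((\<lambda>t. t ^ n * weight a b t) has_integral ((-1)^n * (J s1 - J s2) + (J s1 + J s2))) {-1..1}"
    by (rule has_integral_combine[OF _ _ N P]) auto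
  have "(-1)^n * (J s1 - J s2) + (J s1 + J s2) = Beta (a + 1/2 + real (n div 2 + n mod 2)) d"
  proof (cases "even n")
    case True
    then obtain p where n: "n = 2*p" by auto
    have "(-1)^n * (J s1 - J s2) + (J s1 + J s2) = Beta ((s1 + 1)/2) d" using True by (simp add: J_def)
    also have "(s1 + 1)/2 = a + 1/2 + real (n div 2 + n mod 2)" by (simp add: s1_def n field_simps)
    finally show ?thesis .
  next
    case False
    then obtain p where n: "n = 2*p + 1" using oddE by blast
    have q: "n div 2 + n mod 2 = p + 1" using n by presburger
    have r: "(s2 + 1)/2 = a + 1/2 + real (n div 2 + n mod 2)" unfolding q by (simp add: s2_def n field_simps)
    have "(-1)^n * (J s1 - J s2) + (J s1 + J s2) = Beta ((s2 + 1)/2) d" using False by (simp add: J_def)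
    then show ?thesis unfolding r .
  qed
  with T show ?thesis by (simp add: d_def)
qed




lemma Beta_shift:
  fixes e d :: real
  assumes e: "e > 0" and d: "d > 0"
  shows "Beta (e + real q) d = Beta e d * (pochhammer e q / pochhammer (e + d) q)"
proof -
  have ne: "z \<notin> \<int>\<^sub>\<le>\<^sub>0" if "z > 0" for z :: real
    using that by (auto elim!: nonpos_Ints_cases)
  have g1: "Gamma (e + real q) = pochhammer e q * Gamma e"
    using pochhammer_Gamma[OF ne[OF e], of q] Gamma_real_pos[OF e] by (simp add: field_simps)
  have ed: "e + d > 0" using e d by simp
  have g2: "Gamma (e + d + real q) = pochhammer (e + d) q * Gamma (e + d)"
    using pochhammer_Gamma[OF ne[OF ed], of q] Gamma_real_pos[OF ed] by (simp add: field_simps)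
  have p: "pochhammer (e + d) q > 0" using e d by (intro pochhammer_pos) simp
  have "Beta (e + real q) d = Gamma (e + real q) * Gamma d / Gamma (e + d + real q)"
    by (simp add: Beta_def add_ac)
  also have "\<dots> = Beta e d * (pochhammer e q / pochhammer (e + d) q)"
    unfolding g1 g2 Beta_def using p by (simp add: field_simps)
  finally show ?thesis .
qed

lemma gamma_mu_pos: "\<mu> > -1/2 \<Longrightarrow> gamma_mu \<mu> n > 0"
  unfolding gamma_mu_def by (intro mult_pos_pos pochhammer_pos) auto

lemma gamma_ratio:
  assumes "a > -1/2" "b > -1/2"
  shows "gamma_mu a n / gamma_mu b n =
         pochhammer (a + 1/2) (n div 2 + n mod 2) / pochhammer (b + 1/2) (n div 2 + n mod 2)"
proof -
  have "pochhammer (b + 1/2) (n div 2 + n mod 2) > 0" using assms by (intro pochhammer_pos) simp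
  then show ?thesis unfolding gamma_mu_def by (simp add: field_simps)
qed

lemma gamma_Suc:
  "gamma_mu a (Suc n) = gamma_mu a n *
     (if even n then 2 * (a + 1/2 + real (n div 2)) else 2 * (real (n div 2) + 1))"
proof (cases "even n")
  case True
  then obtain p where n: "n = 2*p" by auto
  have "Suc (2*p) div 2 = p" "Suc (2*p) mod 2 = 1" by presburger+
  then show ?thesis unfolding gamma_mu_def n by (simp add: pochhammer_Suc algebra_simps)
next
  case False
  then obtain p where n: "n = 2*p+1" using oddE by blast
  have "Suc (2*p+1) div 2 = Suc p" "Suc (2*p+1) mod 2 = 0" "(2*p+1) div 2 = p" "(2*p+1) mod 2 = 1" by presburger+
  then show ?thesis unfolding gamma_mu_def n by (simp add: pochhammer_Suc algebra_simps)
qed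

lemma gamma_summable:
  fixes y :: real
  assumes a: "a > -1/2"
  shows "summable (\<lambda>n. y ^ n / gamma_mu a n)"
proof (rule summable_ratio_test[where c = "1/2" and N = "2 * (nat \<lceil>\<bar>y\<bar>\<rceil> + 1)"])
  fix n :: nat assume nN: "n \<ge> 2 * (nat \<lceil>\<bar>y\<bar>\<rceil> + 1)"
  define F where "F = (if even n then 2 * (a + 1/2 + real (n div 2)) else 2 * (real (n div 2) + 1))"
  have ndiv: "real (n div 2) \<ge> \<bar>y\<bar> + 1"
  proof -
    obtain k where k: "k = nat \<lceil>\<bar>y\<bar>\<rceil>" by simp
    have "n div 2 \<ge> k + 1" using nN unfolding k[symmetric] by presburger
    then have "n div 2 \<ge> nat \<lceil>\<bar>y\<bar>\<rceil> + 1" using k by simp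
    then have "real (n div 2) \<ge> real (nat \<lceil>\<bar>y\<bar>\<rceil>) + 1" by linarith
    moreover have "real (nat \<lceil>\<bar>y\<bar>\<rceil>) \<ge> \<bar>y\<bar>" by linarith
    ultimately show ?thesis by linarith
  qed
  have F: "F \<ge> 2 * \<bar>y\<bar>" "F > 0" using ndiv a by (auto simp: F_def)
  have g: "gamma_mu a n > 0" using gamma_mu_pos[OF a] .
  have "norm (y ^ Suc n / gamma_mu a (Suc n)) = \<bar>y\<bar> / F * (\<bar>y\<bar> ^ n / gamma_mu a n)"
    using g F by (simp add: gamma_Suc F_def[symmetric] abs_mult power_abs field_simps)
  also have "\<dots> \<le> 1/2 * (\<bar>y\<bar> ^ n / gamma_mu a n)"
    using F g by (intro mult_right_mono) (auto simp: field_simps)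
  also have "\<bar>y\<bar> ^ n / gamma_mu a n = norm (y ^ n / gamma_mu a n)"
    using g by (simp add: power_abs)
  finally show "norm (y ^ Suc n / gamma_mu a (Suc n)) \<le> 1/2 * norm (y ^ n / gamma_mu a n)" .
qed simp




lemma moment2:
  fixes a b :: real
  assumes a: "a > -1/2" and ab: "a < b"
  shows "((\<lambda>t. t ^ n * weight a b t) has_integral (Beta (a + 1/2) (b - a) * (gamma_mu a n / gamma_mu b n))) {-1..1}"
proof -
  have "Beta (a + 1/2 + real (n div 2 + n mod 2)) (b - a) =
        Beta (a + 1/2) (b - a) * (pochhammer (a + 1/2) (n div 2 + n mod 2) / pochhammer (a + 1/2 + (b - a)) (n div 2 + n mod 2))"
    by (rule Beta_shift) (use a ab in auto)
  also have "a + 1/2 + (b - a) = b + 1/2" by simp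
  also have "pochhammer (a + 1/2) (n div 2 + n mod 2) / pochhammer (b + 1/2) (n div 2 + n mod 2) = gamma_mu a n / gamma_mu b n"
    by (rule gamma_ratio[symmetric]) (use a ab in auto)
  finally show ?thesis using moment[OF a ab, of n] by simp
qed

lemma weight_nonneg: "weight a b t \<ge> 0"
  unfolding weight_def by simp

lemma swap:
  fixes a b x :: real and c :: "nat \<Rightarrow> real"
  assumes a: "a > -1/2" and ab: "a < b"
    and abs: "summable (\<lambda>n. norm (c n) * \<bar>x\<bar> ^ n)"
  shows "(\<lambda>t. (\<Sum>n. c n * (x * t) ^ n) * weight a b t) integrable_on {-1..1}"
    "(\<lambda>n. c n * (gamma_mu a n / gamma_mu b n) * x ^ n) sums
        (integral {-1..1} (\<lambda>t. (\<Sum>n. c n * (x * t) ^ n) * weight a b t) / Beta (a + 1/2) (b - a))"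
proof -
  define B where "B = Beta (a + 1/2) (b - a)"
  have B: "B > 0" using a ab by (simp add: B_def Beta_def)
  define K where "K = (\<Sum>n. norm (c n) * \<bar>x\<bar> ^ n)"
  define f where "f = (\<lambda>k t. (\<Sum>n<k. c n * (x * t) ^ n) * weight a b t)"
  define g where "g = (\<lambda>t. (\<Sum>n. c n * (x * t) ^ n) * weight a b t)"
  define \<theta> where "\<theta> = (\<lambda>n. c n * (gamma_mu a n / gamma_mu b n) * x ^ n)"
  have fI: "(f k has_integral (B * (\<Sum>n<k. \<theta> n))) {-1..1}" for k
  proof -
    have "((\<lambda>t. \<Sum>n<k. (c n * x ^ n) * (t ^ n * weight a b t)) has_integral
            (\<Sum>n<k. (c n * x ^ n) * (B * (gamma_mu a n / gamma_mu b n)))) {-1..1}"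
      by (intro has_integral_sum has_integral_mult_right moment2[OF a ab, folded B_def]) auto
    moreover have "(\<Sum>n<k. (c n * x ^ n) * (B * (gamma_mu a n / gamma_mu b n))) = B * (\<Sum>n<k. \<theta> n)"
      by (simp add: sum_distrib_left \<theta>_def mult_ac)
    ultimately have "((\<lambda>t. \<Sum>n<k. (c n * x ^ n) * (t ^ n * weight a b t)) has_integral (B * (\<Sum>n<k. \<theta> n))) {-1..1}"
      by simp
    then show ?thesis
      unfolding f_def
      by (rule has_integral_eq[rotated]) (auto simp: sum_distrib_right sum_distrib_left power_mult_distrib mult_ac)
  qed
  have hI: "((\<lambda>t. K * weight a b t) has_integral (K * (B * (gamma_mu a 0 / gamma_mu b 0)))) {-1..1}"
    using has_integral_mult_right[OF moment2[OF a ab, of 0], of K] by (simp add: B_def)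
  have sumt: "summable (\<lambda>n. c n * (x * t) ^ n)" and bnd: "norm (f k t) \<le> K * weight a b t"
    if t: "t \<in> {-1..1}" for t k
  proof -
    have le: "norm (c n * (x * t) ^ n) \<le> norm (c n) * \<bar>x\<bar> ^ n" for n
    proof -
      have "\<bar>x * t\<bar> \<le> \<bar>x\<bar>" using t by (auto simp: abs_mult intro: mult_left_le)
      then have "\<bar>x * t\<bar> ^ n \<le> \<bar>x\<bar> ^ n" by (intro power_mono) auto
      then show ?thesis by (simp add: abs_mult power_abs mult_left_mono)
    qed
    show "summable (\<lambda>n. c n * (x * t) ^ n)"
      by (rule summable_comparison_test'[OF abs le])
    have "norm (\<Sum>n<k. c n * (x * t) ^ n) \<le> (\<Sum>n<k. norm (c n) * \<bar>x\<bar> ^ n)"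
      by (rule order_trans[OF norm_sum sum_mono[OF le]])
    also have "\<dots> \<le> K" unfolding K_def by (rule sum_le_suminf[OF abs]) auto
    finally have "norm (\<Sum>n<k. c n * (x * t) ^ n) \<le> K" .
    then show "norm (f k t) \<le> K * weight a b t"
      unfolding f_def using weight_nonneg[of a b t]
      by (simp add: abs_mult mult_right_mono)
  qed
  have conv: "(\<lambda>k. f k t) \<longlonglongrightarrow> g t" if "t \<in> {-1..1}" for t
    unfolding f_def g_def by (intro tendsto_mult_right summable_LIMSEQ sumt[OF that])
  have fint: "f k integrable_on {-1..1}" for k using fI by blast
  have hint: "(\<lambda>t. K * weight a b t) integrable_on {-1..1}" using hI by blast
  note DC = dominated_convergence[OF fint hint bnd conv]
  show "g integrable_on {-1..1}" using DC(1) unfolding g_def by simp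
  have "(\<lambda>k. B * (\<Sum>n<k. \<theta> n)) \<longlonglongrightarrow> integral {-1..1} g"
  proof -
    have "integral {-1..1} (f k) = B * (\<Sum>n<k. \<theta> n)" for k using fI[of k] by (rule integral_unique)
    then show ?thesis using DC(2) by simp
  qed
  then have "(\<lambda>k. (B * (\<Sum>n<k. \<theta> n)) / B) \<longlonglongrightarrow> integral {-1..1} g / B"
    by (intro tendsto_divide tendsto_const) (use B in auto)
  then show "\<theta> sums (integral {-1..1} g / B)"
    unfolding sums_def using B by simp
qed




theorem mainTheorem4:
  fixes \<mu>1 \<mu>2 :: real
  assumes "-1/2 < \<mu>1" and "\<mu>1 < \<mu>2"
  shows "(\<forall>a :: nat \<Rightarrow> real.
            (\<forall>y\<in>{-1<..<1}. summable (\<lambda>n. a n * y ^ n)) \<longrightarrow>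
            (\<forall>x\<in>{-1<..<1}.
               summable (\<lambda>n. a n * (gamma_mu \<mu>1 n / gamma_mu \<mu>2 n) * x ^ n) \<and>
               (\<lambda>t. (\<Sum>n. a n * (x * t) ^ n) * weight \<mu>1 \<mu>2 t) integrable_on {-1..1} \<and>
               (\<Sum>n. a n * (gamma_mu \<mu>1 n / gamma_mu \<mu>2 n) * x ^ n) =
                 1 / Beta (\<mu>1 + 1/2) (\<mu>2 - \<mu>1) *
                 integral {-1..1} (\<lambda>t. (\<Sum>n. a n * (x * t) ^ n) * weight \<mu>1 \<mu>2 t)))
       \<and> (\<forall>x :: real.
            (\<lambda>t. exp_mu \<mu>1 (x * t) * weight \<mu>1 \<mu>2 t) integrable_on {-1..1} \<and>
            exp_mu \<mu>2 x =
              1 / Beta (\<mu>1 + 1/2) (\<mu>2 - \<mu>1) *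
              integral {-1..1} (\<lambda>t. exp_mu \<mu>1 (x * t) * weight \<mu>1 \<mu>2 t))"
proof (intro conjI allI impI ballI)
  have a: "\<mu>1 > -1/2" and ab: "\<mu>1 < \<mu>2" using assms by auto
  have b: "\<mu>2 > -1/2" using a ab by simp
  {
    fix c :: "nat \<Rightarrow> real" and x :: real
    assume hyp: "\<forall>y\<in>{-1<..<1}. summable (\<lambda>n. c n * y ^ n)" and x: "x \<in> {-1<..<1}"
    define r where "r = (\<bar>x\<bar> + 1) / 2"
    have r: "r \<in> {-1<..<1}" "norm x < norm r" using x by (auto simp: r_def)
    have "summable (\<lambda>n. norm (c n * x ^ n))"
      by (rule powser_insidea[OF hyp[rule_format, OF r(1)] r(2)])
    then have abs: "summable (\<lambda>n. norm (c n) * \<bar>x\<bar> ^ n)"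
      by (simp add: abs_mult power_abs)
    note S = swap[OF a ab abs]
    show "summable (\<lambda>n. c n * (gamma_mu \<mu>1 n / gamma_mu \<mu>2 n) * x ^ n)"
      using S(2) by (rule sums_summable)
    show "(\<lambda>t. (\<Sum>n. c n * (x * t) ^ n) * weight \<mu>1 \<mu>2 t) integrable_on {-1..1}" by (rule S(1))
    show "(\<Sum>n. c n * (gamma_mu \<mu>1 n / gamma_mu \<mu>2 n) * x ^ n) =
                 1 / Beta (\<mu>1 + 1/2) (\<mu>2 - \<mu>1) *
                 integral {-1..1} (\<lambda>t. (\<Sum>n. c n * (x * t) ^ n) * weight \<mu>1 \<mu>2 t)"
      using sums_unique[OF S(2)] by simp
  }
  fix x :: real
  define c where "c = (\<lambda>n. 1 / gamma_mu \<mu>1 n)"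
  have g1: "gamma_mu \<mu>1 n > 0" for n using gamma_mu_pos[OF a] .
  have g2: "gamma_mu \<mu>2 n > 0" for n using gamma_mu_pos[OF b] .
  have abs: "summable (\<lambda>n. norm (c n) * \<bar>x\<bar> ^ n)"
    using gamma_summable[OF a, of "\<bar>x\<bar>"] by (simp add: c_def abs_of_pos[OF g1])
  note S = swap[OF a ab abs]
  have fe: "(\<lambda>t. exp_mu \<mu>1 (x * t) * weight \<mu>1 \<mu>2 t) = (\<lambda>t. (\<Sum>n. c n * (x * t) ^ n) * weight \<mu>1 \<mu>2 t)"
    by (simp add: exp_mu_def c_def)
  have th: "(\<lambda>n. c n * (gamma_mu \<mu>1 n / gamma_mu \<mu>2 n) * x ^ n) = (\<lambda>n. x ^ n / gamma_mu \<mu>2 n)"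
    using g1 by (simp add: c_def fun_eq_iff less_imp_neq[OF g1, symmetric])
  show "(\<lambda>t. exp_mu \<mu>1 (x * t) * weight \<mu>1 \<mu>2 t) integrable_on {-1..1}"
    unfolding fe by (rule S(1))
  show "exp_mu \<mu>2 x = 1 / Beta (\<mu>1 + 1/2) (\<mu>2 - \<mu>1) *
              integral {-1..1} (\<lambda>t. exp_mu \<mu>1 (x * t) * weight \<mu>1 \<mu>2 t)"
    unfolding fe using sums_unique[OF S(2), unfolded th] by (simp add: exp_mu_def)
qed


end
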